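(* Let $(Z,S)$ be an aperiodic zero-dimensional topological dynamical system. For every positive integer $N$ there exist a clopen set $B\subset Z$, a continuous function $h:B\to R_N=\{N+1,\ldots,2N+1\}$ and a homeomorphism $T_B:B\to B$ such that $(Z,S)$ is isomorphic (as a dynamical system, i.e. via an equivariant homeomorphism) to the special topological dynamical system $(Q_N,T')$ induced by $(B,T_B,h)$.
   Context: A t.d.s. is a compact metric space with a homeomorphism; aperiodic means no periodic points; zero-dimensional means clopen sets form a basis. Special t.d.s.: given a zero-dimensional compact metric space $B$, a homeomorphism $T_B:B\to B$ and a continuous $h:B\to\mathbb{Z}_{\ge0}$, let $Q=\{(b,z): b\in B,\ 0\le z<h(b)\}\subset B\times\mathbb{Z}_{\ge0}$ and $T'(b,z)=(b,z+1)$ if $z+1<h(b)$, $T'(b,z)=(T_B(b),0)$ if $z+1=h(b)$. $(Q,T')$ is the special t.d.s. induced by $(B,T_B,h)$. *)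

theory Defs
  imports "HOL-Analysis.Analysis"
begin

definition tds :: "'a::metric_space set \<Rightarrow> ('a \<Rightarrow> 'a) \<Rightarrow> bool" where
  "tds Z S \<longleftrightarrow> compact Z \<and> (\<exists>S'. homeomorphism Z Z S S')"

definition aperiodic :: "'a set \<Rightarrow> ('a \<Rightarrow> 'a) \<Rightarrow> bool" where
  "aperiodic Z S \<longleftrightarrow> (\<forall>x\<in>Z. \<forall>n::nat. n > 0 \<longrightarrow> (S ^^ n) x \<noteq> x)"

definition zero_dimensional :: "'a::topological_space set \<Rightarrow> bool" where
  "zero_dimensional Z \<longleftrightarrow>
     (\<forall>U x. openin (top_of_set Z) U \<and> x \<in> U \<longrightarrow>
        (\<exists>V. openin (top_of_set Z) V \<and> closedin (top_of_set Z) V \<and> x \<in> V \<and> V \<subseteq> U))"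

definition special_space :: "'a set \<Rightarrow> ('a \<Rightarrow> nat) \<Rightarrow> ('a \<times> nat) set" where
  "special_space B h = {(b, z). b \<in> B \<and> z < h b}"

definition special_map :: "('a \<Rightarrow> 'a) \<Rightarrow> ('a \<Rightarrow> nat) \<Rightarrow> 'a \<times> nat \<Rightarrow> 'a \<times> nat" where
  "special_map TB h p = (case p of (b, z) \<Rightarrow>
      if z + 1 < h b then (b, z + 1) else (TB b, 0))"

definition tds_isomorphic ::
  "'a::topological_space set \<Rightarrow> ('a \<Rightarrow> 'a) \<Rightarrow> 'b::topological_space set \<Rightarrow> ('b \<Rightarrow> 'b) \<Rightarrow> bool" where
  "tds_isomorphic X S Y T \<longleftrightarrow>
     (\<exists>\<phi> \<psi>. homeomorphism X Y \<phi> \<psi> \<and> (\<forall>x\<in>X. \<phi> (S x) = T (\<phi> x)))"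

end

theory Submission
  imports Defs
begin


locale sysd =
  fixes Z :: "'a::metric_space set" and S S' :: "'a \<Rightarrow> 'a" and N :: nat
  assumes cZ: "compact Z" and hom: "homeomorphism Z Z S S'"
    and ap: "aperiodic Z S" and zd: "zero_dimensional Z" and Npos: "N > 0"
begin

lemma clZ: "closed Z" using cZ compact_imp_closed by blast

lemma S_Z: "x \<in> Z \<Longrightarrow> S x \<in> Z" using hom unfolding homeomorphism_def by blast
lemma S'_Z: "x \<in> Z \<Longrightarrow> S' x \<in> Z" using hom unfolding homeomorphism_def by blast
lemma S'S: "x \<in> Z \<Longrightarrow> S' (S x) = x" using hom unfolding homeomorphism_def by blast
lemma SS': "x \<in> Z \<Longrightarrow> S (S' x) = x" using hom unfolding homeomorphism_def by blast

lemma Sn_Z: "x \<in> Z \<Longrightarrow> (S^^n) x \<in> Z"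
  by (induction n) (auto simp: S_Z)
lemma S'n_Z: "x \<in> Z \<Longrightarrow> (S'^^n) x \<in> Z"
  by (induction n) (auto simp: S'_Z)

lemma cont_Sn: "continuous_on Z (S^^n)"
proof (induction n)
  case 0 then show ?case by (simp add: continuous_on_id)
next
  case (Suc n)
  have "continuous_on Z S" using hom unfolding homeomorphism_def by blast
  then have "continuous_on ((S^^n) ` Z) S" by (rule continuous_on_subset) (auto simp: Sn_Z)
  then show ?case by (simp only: funpow.simps(2)) (rule continuous_on_compose[OF Suc])
qed

lemma cont_S'n: "continuous_on Z (S'^^n)"
proof (induction n)
  case 0 then show ?case by (simp add: continuous_on_id)
next
  case (Suc n)
  have "continuous_on Z S'" using hom unfolding homeomorphism_def by blast
  then have "continuous_on ((S'^^n) ` Z) S'" by (rule continuous_on_subset) (auto simp: S'n_Z)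
  then show ?case by (simp only: funpow.simps(2)) (rule continuous_on_compose[OF Suc])
qed

lemma inv1: "x \<in> Z \<Longrightarrow> (S'^^n) ((S^^n) x) = x"
proof (induction n)
  case (Suc n)
  have "(S'^^Suc n) ((S^^Suc n) x) = (S'^^n) (S' (S ((S^^n) x)))"
    by (simp add: funpow_swap1)
  then show ?case using Suc by (simp add: S'S Sn_Z)
qed simp

lemma inv2: "x \<in> Z \<Longrightarrow> (S^^n) ((S'^^n) x) = x"
proof (induction n)
  case (Suc n)
  have "(S^^Suc n) ((S'^^Suc n) x) = (S^^n) (S (S' ((S'^^n) x)))"
    by (simp add: funpow_swap1)
  then show ?case using Suc by (simp add: SS' S'n_Z)
qed simp

lemma shift1: "x \<in> Z \<Longrightarrow> (S'^^i) ((S^^(i+k)) x) = (S^^k) x"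
  by (simp add: funpow_add inv1 Sn_Z)
lemma shift2: "x \<in> Z \<Longrightarrow> (S^^i) ((S'^^(i+k)) x) = (S'^^k) x"
  by (simp add: funpow_add inv2 S'n_Z)

lemma aper: "x \<in> Z \<Longrightarrow> 0 < i \<Longrightarrow> (S^^i) x \<noteq> x"
  using ap unfolding aperiodic_def by blast

definition clo :: "'a set \<Rightarrow> bool" where
  "clo A \<longleftrightarrow> A \<subseteq> Z \<and> closed A \<and> closed (Z - A)"

definition sep :: "'a set \<Rightarrow> bool" where
  "sep A \<longleftrightarrow> (\<forall>u\<in>A. \<forall>i. 1 \<le> i \<and> i \<le> N \<longrightarrow> (S^^i) u \<notin> A)"

definition D :: "'a set \<Rightarrow> 'a set" where
  "D A = {u\<in>Z. \<exists>i\<le>N. (S^^i) u \<in> A \<or> (S'^^i) u \<in> A}"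

lemma clo_Un: "clo A \<Longrightarrow> clo B \<Longrightarrow> clo (A \<union> B)"
  unfolding clo_def by (auto simp: Diff_Un)

lemma clo_Diff: "clo A \<Longrightarrow> clo B \<Longrightarrow> clo (A - B)"
proof -
  assume a: "clo A" "clo B"
  have "A - B = A \<inter> (Z - B)" using a by (auto simp: clo_def)
  moreover have "Z - (A - B) = (Z - A) \<union> B" using a by (auto simp: clo_def)
  ultimately show ?thesis using a unfolding clo_def by auto
qed

lemma clo_UN: "finite I \<Longrightarrow> (\<And>i. i \<in> I \<Longrightarrow> clo (A i)) \<Longrightarrow> clo (\<Union>i\<in>I. A i)"
proof -
  assume f: "finite I" and a: "\<And>i. i \<in> I \<Longrightarrow> clo (A i)"
  have "Z - (\<Union>i\<in>I. A i) = Z \<inter> (\<Inter>i\<in>I. Z - A i)" by auto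
  moreover have "closed (Z \<inter> (\<Inter>i\<in>I. Z - A i))"
    using a clZ by (intro closed_Int closed_INT) (auto simp: clo_def)
  ultimately show ?thesis using f a unfolding clo_def by (auto intro!: closed_UN)
qed

lemma clo_pre: "clo A \<Longrightarrow> continuous_on Z f \<Longrightarrow> (\<And>x. x \<in> Z \<Longrightarrow> f x \<in> Z) \<Longrightarrow> clo (Z \<inter> f -` A)"
proof -
  assume a: "clo A" "continuous_on Z f" and m: "\<And>x. x \<in> Z \<Longrightarrow> f x \<in> Z"
  have "Z - (Z \<inter> f -` A) = Z \<inter> f -` (Z - A)" using m by auto
  then show ?thesis using a clZ unfolding clo_def by (auto intro!: continuous_closed_preimage clZ)
qed

lemma clo_D: "clo A \<Longrightarrow> clo (D A)"
proof -
  assume a: "clo A"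
  have "D A = (\<Union>i\<in>{..N}. (Z \<inter> (S^^i) -` A) \<union> (Z \<inter> (S'^^i) -` A))"
    unfolding D_def by auto
  moreover have "clo (\<Union>i\<in>{..N}. (Z \<inter> (S^^i) -` A) \<union> (Z \<inter> (S'^^i) -` A))"
    by (intro clo_UN clo_Un clo_pre a cont_Sn cont_S'n) (auto simp: Sn_Z S'n_Z)
  ultimately show ?thesis by simp
qed

lemma D_mono: "A \<subseteq> B \<Longrightarrow> D A \<subseteq> D B" unfolding D_def by blast

lemma D_sub: "A \<subseteq> Z \<Longrightarrow> A \<subseteq> D A"
  unfolding D_def by (auto intro!: exI[of _ 0])

definition g :: "'a set list \<Rightarrow> 'a set" where
  "g Us = foldr (\<lambda>U B. B \<union> (U - D B)) Us {}"

lemma greedy: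
  "(\<forall>U\<in>set Us. clo U \<and> sep U) \<Longrightarrow> clo (g Us) \<and> sep (g Us) \<and> (\<forall>U\<in>set Us. U \<subseteq> D (g Us))"
proof (induction Us)
  case Nil then show ?case by (simp add: g_def clo_def sep_def clZ)
next
  case (Cons U Us)
  let ?B = "g Us"
  have ih: "clo ?B" "sep ?B" "\<forall>U\<in>set Us. U \<subseteq> D ?B" using Cons by auto
  have U: "clo U" "sep U" using Cons.prems by auto
  have gB: "g (U # Us) = ?B \<union> (U - D ?B)" by (simp add: g_def)
  have c: "clo (g (U # Us))" unfolding gB by (intro clo_Un clo_Diff clo_D ih U)
  have BZ: "?B \<subseteq> Z" "U \<subseteq> Z" using ih U by (auto simp: clo_def)
  have s: "sep (g (U # Us))"
    unfolding sep_def gB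
  proof (intro ballI allI impI)
    fix u i assume u: "u \<in> ?B \<union> (U - D ?B)" and i: "1 \<le> i \<and> i \<le> N"
    have uZ: "u \<in> Z" using u BZ by auto
    show "(S ^^ i) u \<notin> ?B \<union> (U - D ?B)"
    proof
      assume v: "(S ^^ i) u \<in> ?B \<union> (U - D ?B)"
      have vZ: "(S ^^ i) u \<in> Z" using uZ Sn_Z by blast
      { assume "u \<in> ?B" "(S ^^ i) u \<in> ?B" then have False using ih(2) i unfolding sep_def by blast }
      moreover
      { assume "u \<in> U" "(S ^^ i) u \<in> U" then have False using U(2) i unfolding sep_def by blast }
      moreover
      { assume "u \<in> ?B" "(S ^^ i) u \<notin> D ?B"
        moreover have "(S'^^i) ((S ^^ i) u) = u" using inv1 uZ by blast
        ultimately have False using vZ i unfolding D_def by auto }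
      moreover
      { assume "u \<notin> D ?B" "(S ^^ i) u \<in> ?B"
        then have False using uZ i unfolding D_def by auto }
      ultimately show False using u v by blast
    qed
  qed
  have "\<forall>V\<in>set (U # Us). V \<subseteq> D (g (U # Us))"
  proof
    fix V assume "V \<in> set (U # Us)"
    have m: "D ?B \<subseteq> D (g (U # Us))" unfolding gB by (rule D_mono) blast
    have "g (U # Us) \<subseteq> D (g (U # Us))" using c by (intro D_sub) (simp add: clo_def)
    then have "U \<subseteq> D (g (U # Us))" using m unfolding gB by blast
    then show "V \<subseteq> D (g (U # Us))" using \<open>V \<in> set (U # Us)\<close> ih(3) m by auto
  qed
  then show ?case using c s by blast
qed

end


context sysd begin

lemma local_sep:
  assumes x: "x \<in> Z"
  shows "\<exists>W T. clo W \<and> sep W \<and> x \<in> W \<and> open T \<and> W = Z \<inter> T"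
proof -
  have "\<forall>i\<in>{1..N}. \<exists>A C. open A \<and> open C \<and> x \<in> A \<and> (S^^i) x \<in> C \<and> A \<inter> C = {}"
  proof
    fix i assume "i \<in> {1..N}"
    then have "(S^^i) x \<noteq> x" using aper x by auto
    then show "\<exists>A C. open A \<and> open C \<and> x \<in> A \<and> (S^^i) x \<in> C \<and> A \<inter> C = {}"
      using separation_t2 by metis
  qed
  then obtain A C where AC: "\<And>i. i \<in> {1..N} \<Longrightarrow> open (A i) \<and> open (C i) \<and> x \<in> A i \<and> (S^^i) x \<in> C i \<and> A i \<inter> C i = {}"
    by metis
  define V where "V = (\<Inter>i\<in>{1..N}. (Z \<inter> A i) \<inter> (Z \<inter> (S^^i) -` C i))"
  have "openin (top_of_set Z) V"
    unfolding V_def using Npos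
  proof (intro openin_INT2)
    fix i assume i: "i \<in> {1..N}"
    have "openin (top_of_set Z) (Z \<inter> A i)" using AC[OF i] openin_open_Int by blast
    moreover have "openin (top_of_set Z) (Z \<inter> (S^^i) -` C i)"
      using AC[OF i] by (intro continuous_openin_preimage_gen cont_Sn) auto
    ultimately show "openin (top_of_set Z) ((Z \<inter> A i) \<inter> (Z \<inter> (S^^i) -` C i))" by blast
  qed auto
  moreover have xV: "x \<in> V" unfolding V_def using AC x by auto
  ultimately obtain W where W: "openin (top_of_set Z) W" "closedin (top_of_set Z) W" "x \<in> W" "W \<subseteq> V"
    using zd unfolding zero_dimensional_def by blast
  have WZ: "W \<subseteq> Z" using W(1) openin_imp_subset by blast
  have "clo W" unfolding clo_def
  proof (intro conjI)
    show "closed W" using W(2) clZ closedin_closed_trans by blast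
    have "closedin (top_of_set Z) (Z - W)" using W(1) by (simp add: openin_closedin_eq)
    then show "closed (Z - W)" using clZ closedin_closed_trans by blast
  qed (fact WZ)
  moreover have "sep W" unfolding sep_def
  proof (intro ballI allI impI notI)
    fix u i assume u: "u \<in> W" and i: "1 \<le> i \<and> i \<le> N" and v: "(S^^i) u \<in> W"
    have "u \<in> V" "(S^^i) u \<in> V" using u v W(4) by auto
    then have "(S^^i) u \<in> C i" "(S^^i) u \<in> A i" using i unfolding V_def by auto
    then show False using AC[of i] i by auto
  qed
  moreover obtain T where "open T" "W = Z \<inter> T" using W(1) openin_open by blast
  ultimately show ?thesis using W(3) by blast
qed

lemma exists_B: "\<exists>B. clo B \<and> sep B \<and> Z \<subseteq> D B"
proof -
  obtain W T where WT: "\<And>x. x \<in> Z \<Longrightarrow> clo (W x) \<and> sep (W x) \<and> x \<in> W x \<and> open (T x) \<and> W x = Z \<inter> T x"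
    using local_sep by metis
  have "Z \<subseteq> (\<Union>x\<in>Z. T x)" using WT by blast
  then obtain F where F: "F \<subseteq> Z" "finite F" "Z \<subseteq> (\<Union>x\<in>F. T x)"
    using compactE_image[OF cZ, of Z T] WT by blast
  obtain xs where xs: "set xs = F" using F(2) finite_list by blast
  define Us where "Us = map W xs"
  have "\<forall>U\<in>set Us. clo U \<and> sep U" unfolding Us_def using xs F WT by auto
  then have G: "clo (g Us) \<and> sep (g Us) \<and> (\<forall>U\<in>set Us. U \<subseteq> D (g Us))" by (rule greedy)
  have "Z \<subseteq> D (g Us)"
  proof
    fix z assume z: "z \<in> Z"
    then obtain x where x: "x \<in> F" "z \<in> T x" using F by blast
    then have "z \<in> W x" using WT F z by blast
    moreover have "W x \<in> set Us" unfolding Us_def using xs x by auto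
    ultimately show "z \<in> D (g Us)" using G by blast
  qed
  then show ?thesis using G by blast
qed

end



locale sysB = sysd +
  fixes B :: "'a set"
  assumes cloB: "clo B" and sepB: "sep B" and covB: "Z \<subseteq> D B"
begin

lemma BZ: "B \<subseteq> Z" using cloB clo_def by blast
lemma clB: "closed B" using cloB clo_def by blast
lemma clZB: "closed (Z - B)" using cloB clo_def by blast

lemma fwd: "x \<in> Z \<Longrightarrow> \<exists>i\<le>2*N. (S^^i) x \<in> B"
proof -
  assume x: "x \<in> Z"
  have "(S^^N) x \<in> D B" using covB Sn_Z x by blast
  then obtain i where i: "i \<le> N" "(S^^i) ((S^^N) x) \<in> B \<or> (S'^^i) ((S^^N) x) \<in> B"
    unfolding D_def by blast
  show ?thesis
  proof (cases "(S^^i) ((S^^N) x) \<in> B")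
    case True
    then have "(S^^(i+N)) x \<in> B" by (simp add: funpow_add)
    then show ?thesis using i by (intro exI[of _ "i+N"]) auto
  next
    case False
    then have "(S'^^i) ((S^^(i + (N-i))) x) \<in> B" using i by simp
    then have "(S^^(N-i)) x \<in> B" using shift1 x by simp
    then show ?thesis by (intro exI[of _ "N-i"]) auto
  qed
qed

lemma bwd: "x \<in> Z \<Longrightarrow> \<exists>i\<le>2*N. (S'^^i) x \<in> B"
proof -
  assume x: "x \<in> Z"
  have "(S'^^N) x \<in> D B" using covB S'n_Z x by blast
  then obtain i where i: "i \<le> N" "(S^^i) ((S'^^N) x) \<in> B \<or> (S'^^i) ((S'^^N) x) \<in> B"
    unfolding D_def by blast
  show ?thesis
  proof (cases "(S'^^i) ((S'^^N) x) \<in> B")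
    case True
    then have "(S'^^(i+N)) x \<in> B" by (simp add: funpow_add)
    then show ?thesis using i by (intro exI[of _ "i+N"]) auto
  next
    case False
    then have "(S^^i) ((S'^^(i + (N-i))) x) \<in> B" using i by simp
    then have "(S'^^(N-i)) x \<in> B" using shift2 x by simp
    then show ?thesis by (intro exI[of _ "N-i"]) auto
  qed
qed

definition h :: "'a \<Rightarrow> nat" where
  "h b = (LEAST m. 0 < m \<and> (S^^m) b \<in> B)"

lemma h_ex: "b \<in> B \<Longrightarrow> \<exists>m. 0 < m \<and> m \<le> 2*N+1 \<and> (S^^m) b \<in> B"
proof -
  assume b: "b \<in> B"
  then have "S b \<in> Z" using BZ S_Z by blast
  then obtain i where "i \<le> 2*N" "(S^^i) (S b) \<in> B" using fwd by blast
  then show ?thesis by (intro exI[of _ "Suc i"]) (auto simp: funpow_swap1)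
qed

lemma h_props:
  assumes b: "b \<in> B"
  shows "0 < h b" "(S^^h b) b \<in> B" "h b \<le> 2*N+1" "N+1 \<le> h b"
    "\<And>m. 0 < m \<Longrightarrow> m < h b \<Longrightarrow> (S^^m) b \<notin> B"
proof -
  obtain m where m: "0 < m" "m \<le> 2*N+1" "(S^^m) b \<in> B" using h_ex b by blast
  have P: "0 < h b \<and> (S^^h b) b \<in> B" unfolding h_def by (rule LeastI[where k=m]) (use m in simp)
  then show "0 < h b" "(S^^h b) b \<in> B" by auto
  have "h b \<le> m" unfolding h_def using m by (intro Least_le) simp
  then show "h b \<le> 2*N+1" using m by simp
  show "\<And>m. 0 < m \<Longrightarrow> m < h b \<Longrightarrow> (S^^m) b \<notin> B"
    unfolding h_def using not_less_Least by blast
  show "N+1 \<le> h b"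
  proof (rule ccontr)
    assume "\<not> N+1 \<le> h b"
    then show False using sepB b P unfolding sep_def by auto
  qed
qed

definition L :: "nat \<Rightarrow> 'a set" where
  "L n = {b\<in>B. (S^^n) b \<in> B \<and> (\<forall>m\<in>{1..<n}. (S^^m) b \<notin> B)}"

lemma L_h: "0 < n \<Longrightarrow> b \<in> L n \<Longrightarrow> h b = n"
  unfolding h_def
proof (rule Least_equality)
  assume "0 < n" "b \<in> L n"
  then show "0 < n \<and> (S^^n) b \<in> B" unfolding L_def by auto
next
  fix y assume a: "0 < n" "b \<in> L n" "0 < y \<and> (S^^y) b \<in> B"
  show "n \<le> y"
  proof (rule ccontr)
    assume "\<not> n \<le> y"
    then have "y \<in> {1..<n}" using a by auto
    then show False using a unfolding L_def by auto
  qed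
qed

lemma in_L: "b \<in> B \<Longrightarrow> b \<in> L (h b)"
  unfolding L_def using h_props by auto

definition I where "I = {N+1..2*N+1}"

lemma L_h': "n \<in> I \<Longrightarrow> b \<in> L n \<Longrightarrow> h b = n"
  using L_h unfolding I_def by auto

lemma B_L: "B = (\<Union>n\<in>I. L n)"
proof
  show "B \<subseteq> (\<Union>n\<in>I. L n)" using in_L h_props unfolding I_def by fastforce
  show "(\<Union>n\<in>I. L n) \<subseteq> B" unfolding L_def by auto
qed

lemma closed_L: "closed (L n)"
proof -
  have "L n = B \<inter> (Z \<inter> (S^^n) -` B) \<inter> (\<Inter>m\<in>{1..<n}. Z \<inter> (S^^m) -` (Z - B))"
    unfolding L_def using BZ Sn_Z by auto
  moreover have "closed (B \<inter> (Z \<inter> (S^^n) -` B) \<inter> (\<Inter>m\<in>{1..<n}. Z \<inter> (S^^m) -` (Z - B)))"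
    using clB clZB clZ cont_Sn by (intro closed_Int closed_INT ballI continuous_closed_preimage) auto
  ultimately show ?thesis by simp
qed

lemma cont_on_B: "(\<And>n. n \<in> I \<Longrightarrow> continuous_on (L n) f) \<Longrightarrow> continuous_on B f"
  by (subst B_L) (intro continuous_on_closed_Union closed_L, auto simp: I_def)

lemma h_cont: "continuous_on B h"
proof (rule cont_on_B)
  fix n assume n: "n \<in> I"
  have "continuous_on (L n) (\<lambda>_. n)" by (rule continuous_on_const)
  then show "continuous_on (L n) h"
    by (rule continuous_on_eq) (metis L_h' n)
qed

definition TB where "TB b = (S^^h b) b"

lemma TB_cont: "continuous_on B TB"
proof (rule cont_on_B)
  fix n assume n: "n \<in> I"
  have "continuous_on (L n) (S^^n)" using cont_Sn by (rule continuous_on_subset) (use BZ in \<open>auto simp: L_def\<close>)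
  then show "continuous_on (L n) TB"
    by (rule continuous_on_eq) (metis L_h' n TB_def)
qed

lemma TB_B: "b \<in> B \<Longrightarrow> TB b \<in> B" unfolding TB_def using h_props by blast

definition Q where "Q = special_space B h"
definition Tp where "Tp = special_map TB h"
definition psi :: "'a \<times> nat \<Rightarrow> 'a" where "psi p = (S^^snd p) (fst p)"

lemma psi_Z: "p \<in> Q \<Longrightarrow> psi p \<in> Z"
  unfolding Q_def special_space_def psi_def using BZ Sn_Z by auto

lemma Q_L: "Q = (\<Union>n\<in>I. L n \<times> {..<n})"
proof
  show "Q \<subseteq> (\<Union>n\<in>I. L n \<times> {..<n})"
  proof
    fix p assume "p \<in> Q"
    then obtain b z where p: "p = (b, z)" "b \<in> B" "z < h b" unfolding Q_def special_space_def by auto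
    then have "h b \<in> I" unfolding I_def using h_props by auto
    then show "p \<in> (\<Union>n\<in>I. L n \<times> {..<n})" using p in_L by auto
  qed
  show "(\<Union>n\<in>I. L n \<times> {..<n}) \<subseteq> Q"
  proof
    fix p assume "p \<in> (\<Union>n\<in>I. L n \<times> {..<n})"
    then obtain n b z where p: "p = (b, z)" "n \<in> I" "b \<in> L n" "z < n" by auto
    then have "h b = n" using L_h unfolding I_def by auto
    then show "p \<in> Q" using p unfolding Q_def special_space_def L_def by auto
  qed
qed

end


context sysB begin

lemma Q_compact: "compact Q"
proof -
  have "compact (L n)" for n
  proof -
    have eq: "Z \<inter> L n = L n" using BZ unfolding L_def by auto
    have "compact (Z \<inter> L n)" by (rule compact_Int_closed[OF cZ closed_L])
    then show ?thesis using eq by simp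
  qed
  then show ?thesis unfolding Q_L I_def
    by (intro compact_UN compact_Times) (simp_all add: finite_imp_compact)
qed

lemma psi_cont: "continuous_on Q psi"
proof -
  have "continuous_on (\<Union>z\<in>{..2*N}. B \<times> {z}) psi"
  proof (intro continuous_on_closed_Union)
    fix z assume "z \<in> {..2*N}"
    have "continuous_on (B \<times> {z}) (\<lambda>p. (S^^z) (fst p))"
      by (rule continuous_on_compose2[OF cont_Sn continuous_on_fst[OF continuous_on_id]]) (use BZ in auto)
    then show "continuous_on (B \<times> {z}) psi"
      by (rule continuous_on_eq) (auto simp: psi_def)
  qed (auto intro: closed_Times clB)
  moreover have "Q \<subseteq> (\<Union>z\<in>{..2*N}. B \<times> {z})"
    unfolding Q_def special_space_def using h_props by fastforce
  ultimately show ?thesis by (rule continuous_on_subset)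
qed

lemma psi_surj: "psi ` Q = Z"
proof
  show "psi ` Q \<subseteq> Z" using psi_Z by auto
  show "Z \<subseteq> psi ` Q"
  proof
    fix x assume x: "x \<in> Z"
    obtain i where i: "(S'^^i) x \<in> B" using bwd x by blast
    define k where "k = (LEAST k. (S'^^k) x \<in> B)"
    have kB: "(S'^^k) x \<in> B" unfolding k_def by (rule LeastI[where k=i]) (use i in simp)
    have kmin: "\<And>j. j < k \<Longrightarrow> (S'^^j) x \<notin> B" unfolding k_def using not_less_Least by blast
    define b where "b = (S'^^k) x"
    have xb: "x = (S^^k) b" unfolding b_def using inv2 x by simp
    have "k < h b"
    proof (rule ccontr)
      assume "\<not> k < h b"
      define m where "m = h b"
      have k: "m + (k - m) = k" using \<open>\<not> k < h b\<close> m_def by simp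
      have "(S^^m) ((S'^^(m + (k - m))) x) = (S'^^(k - m)) x" by (rule shift2[OF x])
      then have "(S^^h b) b = (S'^^(k - h b)) x" using k unfolding m_def b_def by simp
      moreover have "(S^^h b) b \<in> B" using h_props kB b_def by blast
      moreover have "0 < h b" using h_props(1) kB b_def by blast
      then have "k - h b < k" using \<open>\<not> k < h b\<close> by linarith
      ultimately show False using kmin by auto
    qed
    then have "(b, k) \<in> Q" unfolding Q_def special_space_def using kB b_def by auto
    moreover have "psi (b, k) = x" using xb by (simp add: psi_def)
    ultimately show "x \<in> psi ` Q" by force
  qed
qed

lemma psi_inj_aux:
  assumes "b \<in> B" "z < h b" "b' \<in> B" "z' < h b'" "(S^^z) b = (S^^z') b'" "z \<le> z'"
  shows "b = b' \<and> z = z'"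
proof -
  have bZ: "b \<in> Z" "b' \<in> Z" using assms BZ by auto
  have "(S^^z') b' = (S^^(z + (z'-z))) b'" using assms(6) by simp
  also have "\<dots> = (S^^z) ((S^^(z'-z)) b')" by (simp only: funpow_add comp_apply)
  finally have "(S^^z') b' = (S^^z) ((S^^(z'-z)) b')" .
  then have "(S'^^z) ((S^^z) b) = (S'^^z) ((S^^z) ((S^^(z'-z)) b'))" using assms(5) by simp
  then have e: "b = (S^^(z'-z)) b'" using inv1 bZ Sn_Z by simp
  have "z' - z = 0"
  proof (rule ccontr)
    assume "z' - z \<noteq> 0"
    then have "(S^^(z'-z)) b' \<notin> B" using h_props(5)[OF assms(3)] assms by auto
    then show False using e assms(1) by simp
  qed
  then show ?thesis using e assms(6) by simp
qed

lemma psi_inj: "inj_on psi Q"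
proof (rule inj_onI)
  fix p q assume p: "p \<in> Q" and q: "q \<in> Q" and e: "psi p = psi q"
  obtain b z where p': "p = (b, z)" "b \<in> B" "z < h b" using p unfolding Q_def special_space_def by auto
  obtain b' z' where q': "q = (b', z')" "b' \<in> B" "z' < h b'" using q unfolding Q_def special_space_def by auto
  have e': "(S^^z) b = (S^^z') b'" using e p' q' by (simp add: psi_def)
  show "p = q"
  proof (cases "z \<le> z'")
    case True then show ?thesis using psi_inj_aux[OF p'(2,3) q'(2,3) e'] p' q' by simp
  next
    case False then show ?thesis using psi_inj_aux[OF q'(2,3) p'(2,3) e'[symmetric]] p' q' by simp
  qed
qed

lemma Tp_Q: "q \<in> Q \<Longrightarrow> Tp q \<in> Q"
  unfolding Q_def special_space_def Tp_def special_map_def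
  using TB_B h_props by (auto split: if_splits)

lemma psi_Tp: "q \<in> Q \<Longrightarrow> psi (Tp q) = S (psi q)"
proof -
  assume "q \<in> Q"
  then obtain b z where q: "q = (b, z)" "b \<in> B" "z < h b" unfolding Q_def special_space_def by auto
  show ?thesis
  proof (cases "z + 1 < h b")
    case True then show ?thesis using q by (simp add: Tp_def special_map_def psi_def)
  next
    case False
    then have hb: "h b = Suc z" using q by simp
    then have "(S^^h b) b = S ((S^^z) b)" by simp
    then show ?thesis using q False by (simp add: Tp_def special_map_def psi_def TB_def)
  qed
qed

end


context sysB begin

lemma psi_last: "b \<in> B \<Longrightarrow> S (psi (b, h b - 1)) = TB b"
proof -
  assume b: "b \<in> B"
  obtain m where m: "h b = Suc m" using h_props(1)[OF b] gr0_implies_Suc by blast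
  then show ?thesis by (simp add: psi_def TB_def)
qed

lemma last_Q: "b \<in> B \<Longrightarrow> (b, h b - 1) \<in> Q"
proof -
  assume b: "b \<in> B"
  have "0 < h b" by (rule h_props(1)[OF b])
  then show ?thesis unfolding Q_def special_space_def using b by simp
qed

lemma TB_inj: "inj_on TB B"
proof (rule inj_onI)
  fix b b' assume b: "b \<in> B" "b' \<in> B" "TB b = TB b'"
  then have "S' (S (psi (b, h b - 1))) = S' (S (psi (b', h b' - 1)))" using psi_last by simp
  then have "psi (b, h b - 1) = psi (b', h b' - 1)" using S'S psi_Z last_Q b by simp
  then have "(b, h b - 1) = (b', h b' - 1)" by (rule inj_onD[OF psi_inj _ last_Q[OF b(1)] last_Q[OF b(2)]])
  then show "b = b'" by simp
qed

lemma TB_surj: "TB ` B = B"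
proof
  show "TB ` B \<subseteq> B" using TB_B by auto
  show "B \<subseteq> TB ` B"
  proof
    fix c assume c: "c \<in> B"
    then have "S' c \<in> Z" using BZ S'_Z by blast
    then have "S' c \<in> psi ` Q" using psi_surj by simp
    then obtain q where q0: "S' c = psi q" "q \<in> Q" by (rule imageE)
    then have q: "q \<in> Q" "psi q = S' c" by simp_all
    have cZ': "c \<in> Z" using c BZ by blast
    have "psi (Tp q) = c" using psi_Tp[OF q(1)] q(2) SS'[OF cZ'] by simp
    moreover have "psi (c, 0) = c" by (simp add: psi_def)
    moreover have "(c, 0) \<in> Q" unfolding Q_def special_space_def using h_props c by auto
    ultimately have e: "Tp q = (c, 0)" by (intro inj_onD[OF psi_inj _ Tp_Q[OF q(1)]]) auto
    obtain b z where bz: "q = (b, z)" "b \<in> B" using q unfolding Q_def special_space_def by auto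
    show "c \<in> TB ` B"
    proof (cases "z + 1 < h b")
      case True then show ?thesis using e bz by (simp add: Tp_def special_map_def)
    next
      case False then have "TB b = c" using e bz by (simp add: Tp_def special_map_def)
      then show ?thesis using bz by auto
    qed
  qed
qed

lemma TB_hom: "\<exists>TB'. homeomorphism B B TB TB'"
proof (rule homeomorphism_compact)
  show "compact B" using compact_Int_closed[OF cZ clB] BZ by (simp add: Int_absorb1)
qed (use TB_cont TB_surj TB_inj in auto)

lemma iso: "tds_isomorphic Z S Q Tp"
proof -
  obtain phi where hp: "homeomorphism Q Z psi phi"
    using homeomorphism_compact[OF Q_compact psi_cont psi_surj psi_inj] by blast
  then have h2: "homeomorphism Z Q phi psi" by (rule homeomorphism_symD)
  have "\<forall>x\<in>Z. phi (S x) = Tp (phi x)"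
  proof
    fix x assume x: "x \<in> Z"
    have q1: "phi x \<in> Q" using homeomorphism_image2[OF hp] x by blast
    have q2: "psi (phi x) = x" by (rule homeomorphism_apply2[OF hp x])
    have "S x = psi (Tp (phi x))" using psi_Tp[OF q1] q2 by simp
    then show "phi (S x) = Tp (phi x)" using homeomorphism_apply1[OF hp Tp_Q[OF q1]] by simp
  qed
  then show ?thesis unfolding tds_isomorphic_def using h2 by blast
qed

end

theorem mainTheorem6:
  fixes Z :: "'a::metric_space set" and S :: "'a \<Rightarrow> 'a" and N :: nat
  assumes "tds Z S" and "aperiodic Z S" and "zero_dimensional Z" and "N > 0"
  shows "\<exists>B (h :: 'a \<Rightarrow> nat) TB.
           B \<subseteq> Z \<and> openin (top_of_set Z) B \<and> closedin (top_of_set Z) B \<and>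
           continuous_on B h \<and> h ` B \<subseteq> {N+1..2*N+1} \<and>
           (\<exists>TB'. homeomorphism B B TB TB') \<and>
           tds_isomorphic Z S (special_space B h) (special_map TB h)"
proof -
  obtain S' where "compact Z" "homeomorphism Z Z S S'" using assms(1) unfolding tds_def by blast
  then interpret sysd Z S S' N using assms by unfold_locales auto
  obtain B where B: "clo B" "sep B" "Z \<subseteq> D B" using exists_B by blast
  interpret sysB Z S S' N B using B by unfold_locales auto
  have "openin (top_of_set Z) B"
    unfolding openin_closedin_eq using BZ closed_subset[OF _ clZB] by auto
  moreover have "closedin (top_of_set Z) B" using closed_subset[OF BZ clB] .
  moreover have "h ` B \<subseteq> {N+1..2*N+1}" using h_props by auto
  ultimately show ?thesis
    apply (intro exI[of _ B] exI[of _ h] exI[of _ TB])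
    using BZ h_cont TB_hom iso unfolding Q_def Tp_def by simp
qed


end
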